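(* Let $(E,[\cdot,\cdot],\rho)$ be a skew algebroid over $M$ and $|\sigma|$ a nowhere-vanishing section of $|L^E|$. Then for every Hamiltonian $H\in C^\infty(E^* )$, $$\bigl(\varphi_{|\sigma|}\bigr)^v(H)=\mathrm{div}_{\widetilde{|\sigma|}}\,\mathcal X_H .$$
   Context: A skew algebroid: a vector bundle $\tau:E\to M$ of rank $n$ over an $m$-dimensional manifold $M$ with a skew-symmetric $\mathbb R$-bilinear bracket $[\cdot,\cdot]$ on sections and an anchor $\rho:E\to TM$ with $[X,fY]=\rho(X)(f)Y+f[X,Y]$ (no Jacobi identity assumed). In a local basis $(e_i)$ of sections with dual basis $(e^i)$, coordinates $(x^a)$ on $M$ and linear coordinates $(x^a,\xi_i)$ on $E^*$: $[e_i,e_j]=c^k_{ij}e_k$, $\rho(e_i)=\rho^a_i\partial_{x^a}$; the structure corresponds to the linear bivector $\Pi=c^k_{ij}\xi_k\partial_{\xi_i}\otimes\partial_{\xi_j}+\rho^b_i\partial_{\xi_i}\wedge\partial_{x^b}$ on $E^*$. The Hamiltonian vector field of $H$ is $\mathcal X_H=i_{dH}\Pi$, locally $\mathcal X_H=\bigl(c^k_{ij}\xi_k\frac{\partial H}{\partial\xi_i}-\rho^a_j\frac{\partial H}{\partial x^a}\bigr)\partial_{\xi_j}+\rho^b_i\frac{\partial H}{\partial\xi_i}\partial_{x^b}$. $L^E=\wedge^nE\otimes\wedge^mT^*M$, $|L^E|=L^E/\mathbb Z_2$. The $E$-connection on $L^E$ is $\nabla_X(Y_1\wedge\dots\wedge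 Y_n\otimes\mu)=\sum_iY_1\wedge\dots\wedge[X,Y_i]\wedge\dots\wedge Y_n\otimes\mu+Y_1\wedge\dots\wedge Y_n\otimes\mathcal L_{\rho(X)}\mu$. The modular form $\varphi_{|\sigma|}\in\mathrm{Sec}(E^* )$ is defined by $\nabla_X\sigma=\langle X,\varphi_{|\sigma|}\rangle\sigma$ for any local representative $\sigma$ of $|\sigma|$ (locally, for $\sigma=e_1\wedge\dots\wedge e_n\otimes dx^1\wedge\dots\wedge dx^m$, $\varphi=(\sum_kc^k_{ik}+\sum_a\partial\rho^a_i/\partial x^a)e^i$). For a section $\alpha=\alpha_i(x)e^i$ of $E^*$, its vertical lift is the vector field $\alpha^v=\alpha_i(x)\partial_{\xi_i}$ on $E^*$. $\widetilde{|\sigma|}$ is the density on $E^*$ given locally, for $\sigma=f\,e_1\wedge\dots\wedge e_n\otimes dx^1\wedge\dots\wedge dx^m$, by $|f(x)|\,|d\xi_1\cdots d\xi_n\,dx^1\cdots dx^m|$. For a nowhere-vanishing density $\Omega$, $\mathrm{div}_\Omega(X)$ is defined by $\mathcal L_X\Omega=\mathrm{div}_\Omega(X)\,\Omega$. *)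

theory Defs
  imports "HOL-Analysis.Analysis"
begin

text \<open>Local-coordinate model of a skew algebroid E over an open chart U of R^m,
  with E trivialised by a basis of sections e_1..e_n indexed by the finite type 'n,
  coordinates x^a on U indexed by the finite type 'm, and linear coordinates xi_i on E^*.
  A point of E^* over U is a pair (x, xi) in U x R^n.\<close>

definition partial :: "'a::euclidean_space \<Rightarrow> ('a \<Rightarrow> real) \<Rightarrow> 'a \<Rightarrow> real" where
  "partial b F p = frechet_derivative F (at p) b"

coinductive smooth_on :: "'a::euclidean_space set \<Rightarrow> ('a \<Rightarrow> real) \<Rightarrow> bool" where
  "open S \<Longrightarrow> F differentiable_on S \<Longrightarrow> (\<forall>b\<in>Basis. smooth_on S (partial b F))
     \<Longrightarrow> smooth_on S F"

definition dx :: "'m::finite \<Rightarrow> ((real^'m) \<times> (real^'n::finite) \<Rightarrow> real) \<Rightarrow> (real^'m) \<times> (real^'n) \<Rightarrow> real" where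
  "dx a F p = partial (axis a 1, 0) F p"

definition dxi :: "'n::finite \<Rightarrow> ((real^'m::finite) \<times> (real^'n) \<Rightarrow> real) \<Rightarrow> (real^'m) \<times> (real^'n) \<Rightarrow> real" where
  "dxi i F p = partial (0, axis i 1) F p"

definition dU :: "'m::finite \<Rightarrow> (real^'m \<Rightarrow> real) \<Rightarrow> real^'m \<Rightarrow> real" where
  "dU a g x = partial (axis a 1) g x"

text \<open>Structure functions: c k i j x = c^k_ij(x), rho i a x = rho^a_i(x).
  Hamiltonian vector field X_H = i_{dH} Pi, as a vector field (tangent vector in
  coordinates (x, xi)) on E^*:
  X_H = (c^k_ij xi_k dH/dxi_i - rho^a_j dH/dx^a) d/dxi_j + rho^b_i dH/dxi_i d/dx^b.\<close>
definition ham_vf ::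
  "('n::finite \<Rightarrow> 'n \<Rightarrow> 'n \<Rightarrow> real^'m::finite \<Rightarrow> real) \<Rightarrow> ('n \<Rightarrow> 'm \<Rightarrow> real^'m \<Rightarrow> real)
   \<Rightarrow> ((real^'m) \<times> (real^'n) \<Rightarrow> real) \<Rightarrow> (real^'m) \<times> (real^'n) \<Rightarrow> (real^'m) \<times> (real^'n)" where
  "ham_vf c rho H p =
    ((\<chi> b. \<Sum>i\<in>UNIV. rho i b (fst p) * dxi i H p),
     (\<chi> j. (\<Sum>i\<in>UNIV. \<Sum>k\<in>UNIV. c k i j (fst p) * (snd p $ k) * dxi i H p)
            - (\<Sum>a\<in>UNIV. rho j a (fst p) * dx a H p)))"

text \<open>The E-connection on L^E in the local trivialisation sigma_0 = e_1 ^...^ e_n (x) dx^1 ^...^ dx^m: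
  nabla_{e_i}(g sigma_0) = (rho(e_i) g) sigma_0 + g (sum_k c^k_ik + sum_a d rho^a_i / dx^a) sigma_0,
  obtained from the definition via [e_i,e_k] = c^l_ik e_l and L_{rho(e_i)} dx = (div rho(e_i)) dx.
  The coefficient of sigma_0 is returned.\<close>
definition conn ::
  "('n::finite \<Rightarrow> 'n \<Rightarrow> 'n \<Rightarrow> real^'m::finite \<Rightarrow> real) \<Rightarrow> ('n \<Rightarrow> 'm \<Rightarrow> real^'m \<Rightarrow> real)
   \<Rightarrow> 'n \<Rightarrow> (real^'m \<Rightarrow> real) \<Rightarrow> real^'m \<Rightarrow> real" where
  "conn c rho i g x = (\<Sum>a\<in>UNIV. rho i a x * dU a g x)
      + g x * ((\<Sum>k\<in>UNIV. c k i k x) + (\<Sum>a\<in>UNIV. dU a (rho i a) x))"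

text \<open>Modular form phi_|sigma| for sigma = f sigma_0 (f nowhere zero): the components phi_i
  with nabla_{e_i} sigma = phi_i sigma.  (Independent of the sign of the representative.)\<close>
definition modular_form ::
  "('n::finite \<Rightarrow> 'n \<Rightarrow> 'n \<Rightarrow> real^'m::finite \<Rightarrow> real) \<Rightarrow> ('n \<Rightarrow> 'm \<Rightarrow> real^'m \<Rightarrow> real)
   \<Rightarrow> (real^'m \<Rightarrow> real) \<Rightarrow> 'n \<Rightarrow> real^'m \<Rightarrow> real" where
  "modular_form c rho f i x = (THE phi. conn c rho i f x = phi * f x)"

definition vlift :: "('n::finite \<Rightarrow> real^'m::finite \<Rightarrow> real) \<Rightarrow> (real^'m) \<times> (real^'n) \<Rightarrow> (real^'m) \<times> (real^'n)" where
  "vlift alpha p = (0, \<chi> i. alpha i (fst p))"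

definition vf_apply :: "('a::euclidean_space \<Rightarrow> 'a) \<Rightarrow> ('a \<Rightarrow> real) \<Rightarrow> 'a \<Rightarrow> real" where
  "vf_apply X F p = frechet_derivative F (at p) (X p)"

text \<open>Divergence with respect to the density Omega = g |dy^1 ... dy^N| (g > 0) in coordinates y:
  L_X Omega = div_Omega(X) Omega, i.e. div_Omega X = (1/g) sum_alpha d(g X^alpha)/dy^alpha.\<close>
definition div_density :: "('a::euclidean_space \<Rightarrow> real) \<Rightarrow> ('a \<Rightarrow> 'a) \<Rightarrow> 'a \<Rightarrow> real" where
  "div_density g X p = (\<Sum>b\<in>Basis. partial b (\<lambda>q. g q * (X q \<bullet> b)) p) / g p"

end

theory Submission
  imports Defs
begin

lemma fd_linear:
  assumes "F differentiable (at p)"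
  shows "linear (frechet_derivative F (at p))"
  using assms frechet_derivative_works has_derivative_linear by blast

lemma partial_mult:
  fixes F G :: "'a::euclidean_space \<Rightarrow> real"
  assumes "F differentiable (at p)" "G differentiable (at p)"
  shows "partial w (\<lambda>q. F q * G q) p = partial w F p * G p + F p * partial w G p"
proof -
  have "((\<lambda>q. F q * G q) has_derivative
     (\<lambda>h. F p * frechet_derivative G (at p) h + frechet_derivative F (at p) h * G p)) (at p)"
    using has_derivative_mult[OF assms(1)[unfolded frechet_derivative_works] assms(2)[unfolded frechet_derivative_works]] .
  from frechet_derivative_at[OF this] show ?thesis unfolding partial_def
    by (metis add.commute)
qed

lemma partial_sum:
  fixes F :: "'i \<Rightarrow> 'a::euclidean_space \<Rightarrow> real"
  assumes "finite I" "\<And>i. i \<in> I \<Longrightarrow> F i differentiable (at p)"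
  shows "partial w (\<lambda>q. \<Sum>i\<in>I. F i q) p = (\<Sum>i\<in>I. partial w (F i) p)"
proof -
  have "((\<lambda>q. \<Sum>i\<in>I. F i q) has_derivative (\<lambda>h. \<Sum>i\<in>I. frechet_derivative (F i) (at p) h)) (at p)"
    using assms by (intro has_derivative_sum) (simp add: frechet_derivative_works)
  from frechet_derivative_at[OF this] show ?thesis unfolding partial_def
    by metis
qed

lemma partial_diff:
  fixes F G :: "'a::euclidean_space \<Rightarrow> real"
  assumes "F differentiable (at p)" "G differentiable (at p)"
  shows "partial w (\<lambda>q. F q - G q) p = partial w F p - partial w G p"
proof -
  have "((\<lambda>q. F q - G q) has_derivative
     (\<lambda>h. frechet_derivative F (at p) h - frechet_derivative G (at p) h)) (at p)"
    using has_derivative_diff[OF assms(1)[unfolded frechet_derivative_works] assms(2)[unfolded frechet_derivative_works]] .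
  from frechet_derivative_at[OF this] show ?thesis unfolding partial_def
    by metis
qed

lemma deriv_line:
  fixes F :: "'a::euclidean_space \<Rightarrow> real"
  assumes "F differentiable (at (q + t *\<^sub>R w))"
  shows "((\<lambda>s. F (q + s *\<^sub>R w)) has_real_derivative partial w F (q + t *\<^sub>R w)) (at t)"
proof -
  have l: "((\<lambda>s. q + s *\<^sub>R w) has_derivative (\<lambda>s. s *\<^sub>R w)) (at t)"
    by (auto intro!: derivative_eq_intros)
  have "((\<lambda>s. F (q + s *\<^sub>R w)) has_derivative
      (\<lambda>s. frechet_derivative F (at (q + t *\<^sub>R w)) (s *\<^sub>R w))) (at t)"
    using has_derivative_compose[OF l assms[unfolded frechet_derivative_works]] .
  moreover have "(\<lambda>s. frechet_derivative F (at (q + t *\<^sub>R w)) (s *\<^sub>R w)) = (*) (partial w F (q + t *\<^sub>R w))"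
    using linear_scale[OF fd_linear[OF assms]] by (auto simp add: partial_def mult.commute)
  ultimately show ?thesis unfolding has_field_derivative_def
    by simp
qed

lemma mvt2:
  fixes F :: "'a::euclidean_space \<Rightarrow> real"
  assumes h: "h > 0"
    and R: "\<And>s t. 0 \<le> s \<Longrightarrow> s \<le> h \<Longrightarrow> 0 \<le> t \<Longrightarrow> t \<le> h \<Longrightarrow> p + s *\<^sub>R u + t *\<^sub>R v \<in> S"
    and dF: "\<And>q. q \<in> S \<Longrightarrow> F differentiable (at q)"
    and dA: "\<And>q. q \<in> S \<Longrightarrow> partial u F differentiable (at q)"
  shows "\<exists>s t. 0 \<le> s \<and> s \<le> h \<and> 0 \<le> t \<and> t \<le> h \<and>
     F (p + h *\<^sub>R u + h *\<^sub>R v) - F (p + h *\<^sub>R u) - F (p + h *\<^sub>R v) + F p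
       = h * h * partial v (partial u F) (p + s *\<^sub>R u + t *\<^sub>R v)"
proof -
  define g where "g s = F ((p + h *\<^sub>R v) + s *\<^sub>R u) - F (p + s *\<^sub>R u)" for s
  have "\<And>s. 0 \<le> s \<Longrightarrow> s \<le> h \<Longrightarrow> DERIV g s :> (partial u F ((p + h *\<^sub>R v) + s *\<^sub>R u) - partial u F (p + s *\<^sub>R u))"
  proof -
    fix s assume s: "0 \<le> s" "s \<le> h"
    have i1: "(p + h *\<^sub>R v) + s *\<^sub>R u \<in> S" using R[OF s, of h] h by (simp add: algebra_simps)
    have i2: "p + s *\<^sub>R u \<in> S" using R[OF s, of 0] h by simp
    show "DERIV g s :> (partial u F ((p + h *\<^sub>R v) + s *\<^sub>R u) - partial u F (p + s *\<^sub>R u))"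
      unfolding g_def
      by (intro DERIV_diff deriv_line dF i1 i2)
  qed
  from MVT2[OF h this] obtain s where s: "0 < s" "s < h"
    and eq1: "g h - g 0 = (h - 0) * (partial u F ((p + h *\<^sub>R v) + s *\<^sub>R u) - partial u F (p + s *\<^sub>R u))"
    by auto
  have "\<And>t. 0 \<le> t \<Longrightarrow> t \<le> h \<Longrightarrow> DERIV (\<lambda>t. partial u F ((p + s *\<^sub>R u) + t *\<^sub>R v)) t :> partial v (partial u F) ((p + s *\<^sub>R u) + t *\<^sub>R v)"
    by (intro deriv_line dA R) (use s in auto)
  from MVT2[OF h this] obtain t where t: "0 < t" "t < h"
    and eq2: "partial u F ((p + s *\<^sub>R u) + h *\<^sub>R v) - partial u F ((p + s *\<^sub>R u) + 0 *\<^sub>R v)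
       = (h - 0) * partial v (partial u F) ((p + s *\<^sub>R u) + t *\<^sub>R v)"
    by blast
  show ?thesis
    apply (rule exI[of _ s], rule exI[of _ t])
    using s t eq1 eq2 unfolding g_def by (simp add: algebra_simps)
qed

lemma cont_eps:
  fixes D :: "'a::euclidean_space \<Rightarrow> real"
  assumes "isCont D p" "e > 0"
  shows "\<exists>d>0. \<forall>q. norm (q - p) < d \<longrightarrow> \<bar>D q - D p\<bar> < e"
proof -
  from LIM_D[OF assms(1)[unfolded isCont_def] assms(2)] obtain d where
    "d > 0" "\<forall>x. x \<noteq> p \<and> norm (x - p) < d \<longrightarrow> norm (D x - D p) < e" by blast
  then show ?thesis using assms(2) by (metis diff_self abs_zero real_norm_def)
qed

lemma schwarz:
  fixes F :: "'a::euclidean_space \<Rightarrow> real"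
  assumes S: "open S" "p \<in> S"
    and dF: "\<And>q. q \<in> S \<Longrightarrow> F differentiable (at q)"
    and dA: "\<And>q. q \<in> S \<Longrightarrow> partial u F differentiable (at q)"
    and dB: "\<And>q. q \<in> S \<Longrightarrow> partial v F differentiable (at q)"
    and c1: "continuous_on S (partial v (partial u F))"
    and c2: "continuous_on S (partial u (partial v F))"
  shows "partial v (partial u F) p = partial u (partial v F) p"
proof (rule ccontr)
  define D1 where "D1 = partial v (partial u F)"
  define D2 where "D2 = partial u (partial v F)"
  assume ne: "partial v (partial u F) p \<noteq> partial u (partial v F) p"
  define e where "e = \<bar>D1 p - D2 p\<bar> / 2"
  have e: "e > 0" using ne unfolding e_def D1_def D2_def by simp
  have "isCont D1 p" using c1 S continuous_on_eq_continuous_at unfolding D1_def by blast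
  from cont_eps[OF this e] obtain d1 where d1: "d1 > 0" "\<forall>q. norm (q - p) < d1 \<longrightarrow> \<bar>D1 q - D1 p\<bar> < e" by blast
  have "isCont D2 p" using c2 S continuous_on_eq_continuous_at unfolding D2_def by blast
  from cont_eps[OF this e] obtain d2 where d2: "d2 > 0" "\<forall>q. norm (q - p) < d2 \<longrightarrow> \<bar>D2 q - D2 p\<bar> < e" by blast
  from S obtain r where r: "r > 0" "ball p r \<subseteq> S" using open_contains_ball by blast
  define d where "d = min (min d1 d2) r"
  have d: "d > 0" using d1 d2 r unfolding d_def by simp
  define M where "M = norm u + norm v + 1"
  have M: "M > 0" unfolding M_def by (simp add: add_nonneg_pos)
  define h where "h = d / (2 * M)"
  have h: "h > 0" using d M unfolding h_def by simp
  have hM: "h * (norm u + norm v) < d"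
  proof -
    have "h * (norm u + norm v) \<le> h * M" using h unfolding M_def by simp
    also have "h * M = d / 2" unfolding h_def using M by simp
    finally show ?thesis using d by simp
  qed
  have near: "norm (s *\<^sub>R a + t *\<^sub>R b) < d"
    if "0 \<le> s" "s \<le> h" "0 \<le> t" "t \<le> h" "(a = u \<and> b = v) \<or> (a = v \<and> b = u)" for s t a b
  proof -
    have "norm (s *\<^sub>R a + t *\<^sub>R b) \<le> s * norm a + t * norm b"
      using norm_triangle_ineq[of "s *\<^sub>R a" "t *\<^sub>R b"] that by simp
    also have "\<dots> \<le> h * norm a + h * norm b"
      using that by (intro add_mono mult_right_mono) auto
    also have "\<dots> = h * (norm u + norm v)" using that by (auto simp: algebra_simps)
    finally show ?thesis using hM by simp
  qed
  have inS: "p + s *\<^sub>R a + t *\<^sub>R b \<in> S"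
    if "0 \<le> s" "s \<le> h" "0 \<le> t" "t \<le> h" "(a = u \<and> b = v) \<or> (a = v \<and> b = u)" for s t a b
  proof -
    have "norm (s *\<^sub>R a + t *\<^sub>R b) < r" using near[OF that] unfolding d_def by simp
    then have "p + s *\<^sub>R a + t *\<^sub>R b \<in> ball p r"
    proof -
      have "p - (p + s *\<^sub>R a + t *\<^sub>R b) = - (s *\<^sub>R a + t *\<^sub>R b)" by (simp add: algebra_simps)
      then show ?thesis unfolding mem_ball dist_norm using \<open>norm (s *\<^sub>R a + t *\<^sub>R b) < r\<close>
        by (simp only: norm_minus_cancel)
    qed
    then show ?thesis using r by blast
  qed
  obtain s1 t1 where st1: "0 \<le> s1" "s1 \<le> h" "0 \<le> t1" "t1 \<le> h"
    and eq1: "F (p + h *\<^sub>R u + h *\<^sub>R v) - F (p + h *\<^sub>R u) - F (p + h *\<^sub>R v) + F p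
       = h * h * D1 (p + s1 *\<^sub>R u + t1 *\<^sub>R v)"
    using mvt2[OF h, of p u v S F] inS dF dA unfolding D1_def by blast
  obtain s2 t2 where st2: "0 \<le> s2" "s2 \<le> h" "0 \<le> t2" "t2 \<le> h"
    and eq2: "F (p + h *\<^sub>R v + h *\<^sub>R u) - F (p + h *\<^sub>R v) - F (p + h *\<^sub>R u) + F p
       = h * h * D2 (p + s2 *\<^sub>R v + t2 *\<^sub>R u)"
    using mvt2[OF h, of p v u S F] inS dF dB unfolding D2_def by blast
  have "h * h * D1 (p + s1 *\<^sub>R u + t1 *\<^sub>R v) = h * h * D2 (p + s2 *\<^sub>R v + t2 *\<^sub>R u)"
    using eq1 eq2 by (simp add: algebra_simps)
  then have eq: "D1 (p + s1 *\<^sub>R u + t1 *\<^sub>R v) = D2 (p + s2 *\<^sub>R v + t2 *\<^sub>R u)" using h by simp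
  have "\<bar>D1 (p + s1 *\<^sub>R u + t1 *\<^sub>R v) - D1 p\<bar> < e"
    using d1(2) near[OF st1, of u v] unfolding d_def by (simp add: add.assoc)
  moreover have "\<bar>D2 (p + s2 *\<^sub>R v + t2 *\<^sub>R u) - D2 p\<bar> < e"
    using d2(2) near[OF st2, of v u] unfolding d_def by (simp add: add.assoc)
  moreover have gen: "\<And>a b x y :: real. \<bar>a - x\<bar> < \<bar>x - y\<bar>/2 \<Longrightarrow> \<bar>b - y\<bar> < \<bar>x - y\<bar>/2 \<Longrightarrow> a = b \<Longrightarrow> False"
    by (simp add: abs_real_def split: if_splits)
  ultimately show False using eq unfolding e_def by (metis gen)
qed

lemma smooth_onD:
  assumes "smooth_on S F"
  shows "open S" "\<And>q. q \<in> S \<Longrightarrow> F differentiable (at q)" "\<And>b. b \<in> Basis \<Longrightarrow> smooth_on S (partial b F)"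
proof -
  from assms have "open S \<and> F differentiable_on S \<and> (\<forall>b\<in>Basis. smooth_on S (partial b F))"
    by (rule smooth_on.cases) blast
  then show "open S" "\<And>q. q \<in> S \<Longrightarrow> F differentiable (at q)" "\<And>b. b \<in> Basis \<Longrightarrow> smooth_on S (partial b F)"
    by (auto simp: differentiable_on_eq_differentiable_at)
qed

lemma smooth_schwarz:
  assumes "smooth_on S F" "p \<in> S" "u \<in> Basis" "v \<in> Basis"
  shows "partial v (partial u F) p = partial u (partial v F) p"
proof (rule schwarz)
  note s = smooth_onD[OF assms(1)]
  show "open S" "p \<in> S" by (fact s(1), fact assms(2))
  show "\<And>q. q \<in> S \<Longrightarrow> F differentiable (at q)" by (fact s(2))
  have su: "smooth_on S (partial u F)" and sv: "smooth_on S (partial v F)" using s(3) assms by auto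
  show "\<And>q. q \<in> S \<Longrightarrow> partial u F differentiable (at q)" using smooth_onD(2)[OF su] .
  show "\<And>q. q \<in> S \<Longrightarrow> partial v F differentiable (at q)" using smooth_onD(2)[OF sv] .
  have "smooth_on S (partial v (partial u F))" using smooth_onD(3)[OF su] assms by auto
  then show "continuous_on S (partial v (partial u F))"
    by (intro differentiable_imp_continuous_on) (auto simp: differentiable_on_eq_differentiable_at smooth_onD)
  have "smooth_on S (partial u (partial v F))" using smooth_onD(3)[OF sv] assms by auto
  then show "continuous_on S (partial u (partial v F))"
    by (intro differentiable_imp_continuous_on) (auto simp: differentiable_on_eq_differentiable_at smooth_onD)
qed

lemma partial_zero:
  assumes "F differentiable (at p)"
  shows "partial 0 F p = 0"
  unfolding partial_def using linear_0[OF fd_linear[OF assms]] .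

lemma has_derivative_fst_comp:
  assumes "g differentiable (at (fst p))"
  shows "((\<lambda>q. g (fst q)) has_derivative (\<lambda>w. frechet_derivative g (at (fst p)) (fst w))) (at p)"
  using has_derivative_compose[OF has_derivative_fst[OF has_derivative_ident] assms[unfolded frechet_derivative_works]] .

lemma partial_fst:
  assumes "g differentiable (at (fst p))"
  shows "partial w (\<lambda>q. g (fst q)) p = partial (fst w) g (fst p)"
  unfolding partial_def frechet_derivative_at[OF has_derivative_fst_comp[OF assms], symmetric] ..

lemma differentiable_fst_comp:
  assumes "g differentiable (at (fst p))"
  shows "(\<lambda>q. g (fst q)) differentiable (at p)"
  using has_derivative_fst_comp[OF assms] differentiable_def by blast

lemma abs_deriv: "(y::real) \<noteq> 0 \<Longrightarrow> (abs has_derivative (\<lambda>t. t * sgn y)) (at y)"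
proof -
  assume y: "y \<noteq> 0"
  show ?thesis
  proof (cases "y > 0")
    case True
    have "((\<lambda>t::real. t) has_derivative (\<lambda>t. t)) (at y)" by (rule has_derivative_ident)
    then have "(abs has_derivative (\<lambda>t. t)) (at y)"
      by (rule has_derivative_transform_within_open[where s="{0<..}"]) (use True in auto)
    then show ?thesis using True by simp
  next
    case False
    then have n: "y < 0" using y by simp
    have "((\<lambda>t::real. - t) has_derivative (\<lambda>t. - t)) (at y)" by (intro derivative_intros)
    then have "(abs has_derivative (\<lambda>t. - t)) (at y)"
      by (rule has_derivative_transform_within_open[where s="{..<0}"]) (use n in auto)
    then show ?thesis using n by simp
  qed
qed

lemma has_derivative_abs_fst_comp:
  fixes g :: "'a::euclidean_space \<Rightarrow> real"
  assumes "g differentiable (at (fst p))" "g (fst p) \<noteq> 0"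
  shows "((\<lambda>q. \<bar>g (fst q)\<bar>) has_derivative (\<lambda>w. frechet_derivative g (at (fst p)) (fst w) * sgn (g (fst p)))) (at p)"
  using has_derivative_compose[OF has_derivative_fst_comp[OF assms(1)] abs_deriv[OF assms(2)]] .

lemma partial_abs_fst:
  fixes g :: "'a::euclidean_space \<Rightarrow> real"
  assumes "g differentiable (at (fst p))" "g (fst p) \<noteq> 0"
  shows "partial w (\<lambda>q. \<bar>g (fst q)\<bar>) p = sgn (g (fst p)) * partial (fst w) g (fst p)"
  unfolding partial_def frechet_derivative_at[OF has_derivative_abs_fst_comp[OF assms], symmetric]
  by (simp add: mult.commute)

lemma differentiable_abs_fst_comp:
  fixes g :: "'a::euclidean_space \<Rightarrow> real"
  assumes "g differentiable (at (fst p))" "g (fst p) \<noteq> 0"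
  shows "(\<lambda>q. \<bar>g (fst q)\<bar>) differentiable (at p)"
  using has_derivative_abs_fst_comp[OF assms] differentiable_def by blast

lemma bl_snd_nth: "bounded_linear (\<lambda>q::'a::real_normed_vector \<times> (real^'n). snd q $ k)"
  using bounded_linear_compose[OF bounded_linear_vec_nth[where i=k] bounded_linear_snd] by (simp add: o_def)

lemma partial_snd_nth:
  "partial w (\<lambda>q::'a::euclidean_space \<times> (real^'n::finite). snd q $ k) p = snd w $ k"
  unfolding partial_def frechet_derivative_at[OF bounded_linear.has_derivative[OF bl_snd_nth has_derivative_ident], symmetric]
  by simp

lemma differentiable_snd_nth:
  "(\<lambda>q::'a::euclidean_space \<times> (real^'n::finite). snd q $ k) differentiable (at p)"
  using bounded_linear.has_derivative[OF bl_snd_nth has_derivative_ident] differentiable_def by blast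

lemma sum_Basis_prod_real:
  fixes g :: "('a::euclidean_space \<times> 'b::euclidean_space) \<Rightarrow> real"
  shows "sum g Basis = (\<Sum>u\<in>Basis. g (u, 0)) + (\<Sum>v\<in>Basis. g (0, v))"
proof -
  have "inj_on (\<lambda>u. (u::'a, 0::'b)) Basis" "inj_on (\<lambda>u. (0::'a, u::'b)) Basis"
    by (auto intro!: inj_onI Pair_inject)
  thus ?thesis
    unfolding Basis_prod_def
    by (subst sum.union_disjoint) (auto simp: Basis_prod_def sum.reindex)
qed

lemma Basis_vec_real: "(Basis :: (real^'n) set) = range (\<lambda>i. axis i 1)"
  unfolding Basis_vec_def by auto

lemma sum_Basis_vec:
  fixes g :: "real^'n::finite \<Rightarrow> real"
  shows "(\<Sum>u\<in>Basis. g u) = (\<Sum>i\<in>UNIV. g (axis i 1))"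
proof -
  have "inj (\<lambda>i::'n. axis i (1::real))" by (auto intro!: injI simp: axis_eq_axis)
  then show ?thesis unfolding Basis_vec_real by (simp add: sum.reindex)
qed

lemma lhs_expand:
  fixes H :: "(real^'m::finite) \<times> (real^'n::finite) \<Rightarrow> real"
  assumes "H differentiable (at p)"
  shows "frechet_derivative H (at p) (0, \<chi> i. phi i) = (\<Sum>i\<in>UNIV. phi i * partial (0, axis i 1) H p)"
proof -
  have "(0::real^'m, \<chi> i. phi i) = (\<Sum>i\<in>UNIV. phi i *\<^sub>R (0, axis i 1))"
  proof (rule prod_eqI)
    show "fst (0::real^'m, \<chi> i. phi i) = fst (\<Sum>i\<in>UNIV. phi i *\<^sub>R ((0::real^'m), axis i (1::real)))"
      by (simp add: fst_sum)
    have "(\<chi> i. phi i) = (\<Sum>i\<in>UNIV. phi i *\<^sub>R (axis i 1 :: real^'n))"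
      by (simp add: vec_eq_iff sum_component axis_def if_distrib sum.delta sum.delta' cong: if_cong)
    then show "snd (0::real^'m, \<chi> i. phi i) = snd (\<Sum>i\<in>UNIV. phi i *\<^sub>R ((0::real^'m), axis i (1::real)))"
      by (simp add: snd_sum)
  qed
  moreover have l: "linear (frechet_derivative H (at p))" using fd_linear[OF assms] .
  ultimately show ?thesis
    by (simp only: linear_sum[OF l] linear_scale[OF l] real_scaleR_def partial_def)
qed

theorem mainTheorem3:
  fixes U :: "(real^'m::finite) set"
    and c :: "'n::finite \<Rightarrow> 'n \<Rightarrow> 'n \<Rightarrow> real^'m \<Rightarrow> real"
    and rho :: "'n \<Rightarrow> 'm \<Rightarrow> real^'m \<Rightarrow> real"
    and f :: "real^'m \<Rightarrow> real"
    and H :: "(real^'m) \<times> (real^'n) \<Rightarrow> real"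
  assumes "open U"
    and "\<And>k i j. smooth_on U (c k i j)"
    and "\<And>k i j x. x \<in> U \<Longrightarrow> c k i j x = - c k j i x"
    and "\<And>i a. smooth_on U (rho i a)"
    and "smooth_on U f"
    and "\<And>x. x \<in> U \<Longrightarrow> f x \<noteq> 0"
    and "smooth_on (U \<times> UNIV) H"
  shows "\<forall>p \<in> U \<times> UNIV.
           vf_apply (vlift (modular_form c rho f)) H p
           = div_density (\<lambda>q. \<bar>f (fst q)\<bar>) (ham_vf c rho H) p"
proof
  fix p :: "(real^'m) \<times> (real^'n)" assume pP: "p \<in> U \<times> UNIV"
  define x where "x = fst p"
  define xi where "xi = snd p"
  have xU: "x \<in> U" using pP unfolding x_def by auto
  have fx: "f x \<noteq> 0" using assms(6) xU .
  define ea :: "'m \<Rightarrow> (real^'m) \<times> (real^'n)" where "ea a = (axis a 1, 0)" for a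
  define en :: "'n \<Rightarrow> (real^'m) \<times> (real^'n)" where "en j = (0, axis j 1)" for j
  have eaB: "ea a \<in> Basis" for a unfolding ea_def Basis_prod_def by auto
  have enB: "en j \<in> Basis" for j unfolding en_def Basis_prod_def by auto
  define Hxi where "Hxi i = partial (en i) H" for i
  define Hx where "Hx a = partial (ea a) H" for a
  note sH = smooth_onD[OF assms(7)]
  have dH: "H differentiable (at p)" using sH(2) pP .
  have sHxi: "smooth_on (U \<times> UNIV) (Hxi i)" for i unfolding Hxi_def using sH(3) enB .
  have sHx: "smooth_on (U \<times> UNIV) (Hx a)" for a unfolding Hx_def using sH(3) eaB .
  have dHxi: "Hxi i differentiable (at p)" for i using smooth_onD(2)[OF sHxi] pP .
  have dHx: "Hx a differentiable (at p)" for a using smooth_onD(2)[OF sHx] pP .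
  have dc: "c k i j differentiable (at (fst p))" for k i j
    using smooth_onD(2)[OF assms(2)] xU unfolding x_def .
  have drho: "rho i a differentiable (at (fst p))" for i a
    using smooth_onD(2)[OF assms(4)] xU unfolding x_def .
  have df: "f differentiable (at (fst p))"
    using smooth_onD(2)[OF assms(5)] xU unfolding x_def .
  have fx': "f (fst p) \<noteq> 0" using fx unfolding x_def .
  have S1: "partial (en j) (Hxi i) p = partial (en i) (Hxi j) p" for i j
    unfolding Hxi_def using smooth_schwarz[OF assms(7) pP enB enB] .
  have S2: "partial (en j) (Hx a) p = partial (ea a) (Hxi j) p" for a j
    unfolding Hxi_def Hx_def using smooth_schwarz[OF assms(7) pP eaB enB] .
  have hv: "ham_vf c rho H = (\<lambda>q. ((\<chi> b. \<Sum>i\<in>UNIV. rho i b (fst q) * Hxi i q),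
     (\<chi> j. (\<Sum>i\<in>UNIV. \<Sum>k\<in>UNIV. c k i j (fst q) * (snd q $ k) * Hxi i q)
            - (\<Sum>a\<in>UNIV. rho j a (fst q) * Hx a q))))"
    by (rule ext) (simp add: ham_vf_def Hxi_def Hx_def dxi_def dx_def en_def ea_def)
  have div: "div_density (\<lambda>q. \<bar>f (fst q)\<bar>) (ham_vf c rho H) p =
     ((\<Sum>b\<in>UNIV. partial (ea b) (\<lambda>q. \<bar>f (fst q)\<bar> * (\<Sum>i\<in>UNIV. rho i b (fst q) * Hxi i q)) p)
      + (\<Sum>j\<in>UNIV. partial (en j) (\<lambda>q. \<bar>f (fst q)\<bar> * ((\<Sum>i\<in>UNIV. \<Sum>k\<in>UNIV. c k i j (fst q) * (snd q $ k) * Hxi i q)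
            - (\<Sum>a\<in>UNIV. rho j a (fst q) * Hx a q))) p)) / \<bar>f x\<bar>"
    unfolding div_density_def sum_Basis_prod_real sum_Basis_vec hv x_def
    by (simp add: inner_axis ea_def en_def)
  have fst_ea: "fst (ea a) = axis a 1" "snd (ea a) = 0" for a unfolding ea_def by auto
  have fst_en: "fst (en j) = 0" "snd (en j) = axis j 1" for j unfolding en_def by auto
  note dd = dHxi dHx dc drho df fx' differentiable_fst_comp differentiable_abs_fst_comp differentiable_snd_nth
  have T1: "partial (ea b) (\<lambda>q. \<bar>f (fst q)\<bar> * (\<Sum>i\<in>UNIV. rho i b (fst q) * Hxi i q)) p
     = sgn (f x) * dU b f x * (\<Sum>i\<in>UNIV. rho i b x * Hxi i p)
       + \<bar>f x\<bar> * (\<Sum>i\<in>UNIV. dU b (rho i b) x * Hxi i p + rho i b x * partial (ea b) (Hxi i) p)" for b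
    unfolding x_def dU_def
    by (simp add: dd partial_mult partial_sum partial_abs_fst partial_fst fst_ea fst_en)
  have T2: "partial (en j) (\<lambda>q. \<bar>f (fst q)\<bar> * ((\<Sum>i\<in>UNIV. \<Sum>k\<in>UNIV. c k i j (fst q) * (snd q $ k) * Hxi i q)
            - (\<Sum>a\<in>UNIV. rho j a (fst q) * Hx a q))) p
     = \<bar>f x\<bar> * ((\<Sum>i\<in>UNIV. \<Sum>k\<in>UNIV. c k i j x * (axis j 1 $ k) * Hxi i p + c k i j x * xi $ k * partial (en j) (Hxi i) p)
         - (\<Sum>a\<in>UNIV. rho j a x * partial (en j) (Hx a) p))" for j
    unfolding x_def xi_def
    by (simp add: dd partial_mult partial_sum partial_diff partial_abs_fst partial_fst partial_zero partial_snd_nth fst_ea fst_en)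
  define h where "h i = Hxi i p" for i
  define M where "M a i = partial (ea a) (Hxi i) p" for a i
  define Hs where "Hs i j = partial (en j) (Hxi i) p" for i j
  have Hs_sym: "Hs i j = Hs j i" for i j unfolding Hs_def using S1 .
  define F where "F i j = (\<Sum>k\<in>UNIV. c k i j x * xi $ k)" for i j
  have F_anti: "F i j = - F j i" for i j
  proof -
    have "c k i j x * xi $ k = - (c k j i x * xi $ k)" for k using assms(3)[OF xU, of k i j] by simp
    then show ?thesis unfolding F_def by (simp only: sum_negf)
  qed
  have A: "(\<Sum>j\<in>UNIV. \<Sum>i\<in>UNIV. \<Sum>k\<in>UNIV. c k i j x * xi $ k * Hs i j) = 0"
  proof -
    define Z where "Z = (\<Sum>i\<in>UNIV. \<Sum>j\<in>UNIV. F i j * Hs i j)"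
    have e1: "(\<Sum>j\<in>UNIV. \<Sum>i\<in>UNIV. \<Sum>k\<in>UNIV. c k i j x * xi $ k * Hs i j) = (\<Sum>j\<in>UNIV. \<Sum>i\<in>UNIV. F i j * Hs i j)"
      unfolding F_def by (simp add: sum_distrib_right)
    have e2: "(\<Sum>j\<in>UNIV. \<Sum>i\<in>UNIV. F i j * Hs i j) = Z"
      unfolding Z_def by (rule sum.swap)
    have e3: "(\<Sum>j\<in>UNIV. \<Sum>i\<in>UNIV. F i j * Hs i j) = - Z"
    proof -
      have pw: "F i j * Hs i j = - (F j i * Hs j i)" for i j
        by (metis F_anti Hs_sym mult_minus_left)
      have "(\<Sum>j\<in>UNIV. \<Sum>i\<in>UNIV. F i j * Hs i j) = (\<Sum>j\<in>UNIV. \<Sum>i\<in>UNIV. - (F j i * Hs j i))"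
        by (intro sum.cong refl) (rule pw)
      also have "\<dots> = - (\<Sum>j\<in>UNIV. \<Sum>i\<in>UNIV. F j i * Hs j i)" by (simp only: sum_negf)
      finally show ?thesis unfolding Z_def .
    qed
    show ?thesis using e1 e2 e3 by simp
  qed
  define Df where "Df a = dU a f x" for a
  define Dr where "Dr i a = dU a (rho i a) x" for i a
  define Cc where "Cc i = (\<Sum>k\<in>UNIV. c k i k x)" for i
  define phi where "phi i = (\<Sum>a\<in>UNIV. rho i a x * Df a) / f x + Cc i + (\<Sum>a\<in>UNIV. Dr i a)" for i
  have mf: "modular_form c rho f i x = phi i" for i
    unfolding modular_form_def
  proof (rule the_equality)
    show "conn c rho i f x = phi i * f x"
      unfolding conn_def phi_def Df_def Dr_def Cc_def using fx by (simp add: field_simps)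
    show "\<And>ph. conn c rho i f x = ph * f x \<Longrightarrow> ph = phi i"
      unfolding conn_def phi_def Df_def Dr_def Cc_def using fx by (simp add: field_simps)
  qed
  have L: "vf_apply (vlift (modular_form c rho f)) H p = (\<Sum>i\<in>UNIV. phi i * h i)"
    unfolding vf_apply_def vlift_def lhs_expand[OF dH] h_def Hxi_def en_def
    by (simp add: mf[unfolded x_def])
  have B: "(\<Sum>j\<in>UNIV. \<Sum>i\<in>UNIV. \<Sum>k\<in>UNIV. c k i j x * (axis j 1 $ k) * h i) = (\<Sum>i\<in>UNIV. Cc i * h i)"
  proof -
    have "(\<Sum>j\<in>UNIV. \<Sum>i\<in>UNIV. \<Sum>k\<in>UNIV. c k i j x * (axis j 1 $ k) * h i) = (\<Sum>j\<in>UNIV. \<Sum>i\<in>UNIV. c j i j x * h i)"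
    proof (intro sum.cong refl)
      fix j i
      have "c k i j x * (axis j 1 $ k) * h i = (if k = j then c j i j x * h i else 0)" for k
        by (simp add: axis_def)
      then show "(\<Sum>k\<in>UNIV. c k i j x * (axis j 1 $ k) * h i) = c j i j x * h i"
        by simp
    qed
    also have "\<dots> = (\<Sum>i\<in>UNIV. \<Sum>j\<in>UNIV. c j i j x * h i)" by (rule sum.swap)
    also have "\<dots> = (\<Sum>i\<in>UNIV. Cc i * h i)" unfolding Cc_def by (simp add: sum_distrib_right)
    finally show ?thesis .
  qed
  define Q where "Q = (\<Sum>j\<in>UNIV. \<Sum>a\<in>UNIV. rho j a x * M a j)"
  have C: "(\<Sum>b\<in>UNIV. \<Sum>i\<in>UNIV. rho i b x * M b i) = Q" unfolding Q_def by (rule sum.swap)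
  define X where "X = (\<Sum>b\<in>UNIV. Df b * (\<Sum>i\<in>UNIV. rho i b x * h i))"
  define Y where "Y = (\<Sum>b\<in>UNIV. \<Sum>i\<in>UNIV. Dr i b * h i)"
  have sT1: "(\<Sum>b\<in>UNIV. sgn (f x) * dU b f x * (\<Sum>i\<in>UNIV. rho i b x * Hxi i p)
       + \<bar>f x\<bar> * (\<Sum>i\<in>UNIV. dU b (rho i b) x * Hxi i p + rho i b x * partial (ea b) (Hxi i) p))
     = sgn (f x) * X + \<bar>f x\<bar> * (Y + Q)"
    unfolding X_def Y_def C[symmetric] Df_def[symmetric] Dr_def[symmetric] h_def[symmetric] M_def[symmetric]
    by (simp add: sum.distrib sum_distrib_left mult.assoc distrib_left)
  have sT2: "(\<Sum>j\<in>UNIV. \<bar>f x\<bar> * ((\<Sum>i\<in>UNIV. \<Sum>k\<in>UNIV. c k i j x * (axis j 1 $ k) * Hxi i p + c k i j x * xi $ k * partial (en j) (Hxi i) p)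
         - (\<Sum>a\<in>UNIV. rho j a x * partial (en j) (Hx a) p)))
     = \<bar>f x\<bar> * ((\<Sum>i\<in>UNIV. Cc i * h i) - Q)"
  proof -
    have "(\<Sum>j\<in>UNIV. \<bar>f x\<bar> * ((\<Sum>i\<in>UNIV. \<Sum>k\<in>UNIV. c k i j x * (axis j 1 $ k) * Hxi i p + c k i j x * xi $ k * partial (en j) (Hxi i) p)
         - (\<Sum>a\<in>UNIV. rho j a x * partial (en j) (Hx a) p)))
      = \<bar>f x\<bar> * ((\<Sum>j\<in>UNIV. \<Sum>i\<in>UNIV. \<Sum>k\<in>UNIV. c k i j x * (axis j 1 $ k) * h i)
          + (\<Sum>j\<in>UNIV. \<Sum>i\<in>UNIV. \<Sum>k\<in>UNIV. c k i j x * xi $ k * Hs i j) - Q)"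
      unfolding Q_def h_def Hs_def M_def S2
      by (simp add: sum.distrib sum_subtractf sum_distrib_left distrib_left right_diff_distrib)
    then show ?thesis unfolding A B by simp
  qed
  have R: "div_density (\<lambda>q. \<bar>f (fst q)\<bar>) (ham_vf c rho H) p
      = (sgn (f x) * X + \<bar>f x\<bar> * (Y + Q) + \<bar>f x\<bar> * ((\<Sum>i\<in>UNIV. Cc i * h i) - Q)) / \<bar>f x\<bar>"
    unfolding div T1 T2 sT1 sT2 ..
  have X2: "X = (\<Sum>i\<in>UNIV. (\<Sum>a\<in>UNIV. rho i a x * Df a) * h i)"
  proof -
    have "X = (\<Sum>b\<in>UNIV. \<Sum>i\<in>UNIV. rho i b x * Df b * h i)"
      unfolding X_def by (simp add: sum_distrib_left mult.assoc mult.left_commute)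
    also have "\<dots> = (\<Sum>i\<in>UNIV. \<Sum>b\<in>UNIV. rho i b x * Df b * h i)" by (rule sum.swap)
    also have "\<dots> = (\<Sum>i\<in>UNIV. (\<Sum>a\<in>UNIV. rho i a x * Df a) * h i)" by (simp add: sum_distrib_right)
    finally show ?thesis .
  qed
  have Y2: "Y = (\<Sum>i\<in>UNIV. (\<Sum>a\<in>UNIV. Dr i a) * h i)"
  proof -
    have "Y = (\<Sum>i\<in>UNIV. \<Sum>b\<in>UNIV. Dr i b * h i)" unfolding Y_def by (rule sum.swap)
    also have "\<dots> = (\<Sum>i\<in>UNIV. (\<Sum>a\<in>UNIV. Dr i a) * h i)" by (simp add: sum_distrib_right)
    finally show ?thesis .
  qed
  have L2: "(\<Sum>i\<in>UNIV. phi i * h i) = X / f x + (\<Sum>i\<in>UNIV. Cc i * h i) + Y"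
  proof -
    have e1: "(\<Sum>i\<in>UNIV. phi i * h i) = (\<Sum>i\<in>UNIV. (\<Sum>a\<in>UNIV. rho i a x * Df a) / f x * h i)
       + (\<Sum>i\<in>UNIV. Cc i * h i) + (\<Sum>i\<in>UNIV. (\<Sum>a\<in>UNIV. Dr i a) * h i)"
      unfolding phi_def by (simp add: distrib_right sum.distrib)
    have e2: "(\<Sum>i\<in>UNIV. (\<Sum>a\<in>UNIV. rho i a x * Df a) / f x * h i) = X / f x"
      unfolding X2 sum_divide_distrib by (rule sum.cong[OF refl]) (simp add: sum_divide_distrib[symmetric])
    show ?thesis unfolding e1 e2 Y2 ..
  qed
  have sg: "sgn (f x) / \<bar>f x\<bar> = 1 / f x" using fx by (simp add: sgn_if)
  have "(sgn (f x) * X + \<bar>f x\<bar> * (Y + Q) + \<bar>f x\<bar> * ((\<Sum>i\<in>UNIV. Cc i * h i) - Q)) / \<bar>f x\<bar>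
     = (sgn (f x) / \<bar>f x\<bar>) * X + (Y + (\<Sum>i\<in>UNIV. Cc i * h i))"
    using fx by (simp add: field_simps)
  also have "\<dots> = X / f x + (\<Sum>i\<in>UNIV. Cc i * h i) + Y" unfolding sg by simp
  finally have R2: "div_density (\<lambda>q. \<bar>f (fst q)\<bar>) (ham_vf c rho H) p = X / f x + (\<Sum>i\<in>UNIV. Cc i * h i) + Y"
    using R by simp
  show "vf_apply (vlift (modular_form c rho f)) H p = div_density (\<lambda>q. \<bar>f (fst q)\<bar>) (ham_vf c rho H) p"
    unfolding L L2 R2 ..
qed

end
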